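(* Let $N\ge1$, $h,\varepsilon\in(0,1)$, and let $\Phi$ be the opinion operator defined in the context. Let $P=(p_1,\dots,p_N)$ be a nondecreasing fixed point of $\Phi$ of one of the following two forms, with associated indices $a\le m$: (i) $P=(-1,\dots,-1,0,\dots,0,1,\dots,1)$ with at least one zero entry, where $a$ and $m$ are the first and last indices with $p_k=0$; (ii) there are indices $1\le a\le l<b\le m\le N$ with $p_k=-1$ for $k<a$, $-\varepsilon<p_k<0$ for $a\le k\le l$, $p_k=0$ for $l<k<b$, $0<p_k<\varepsilon$ for $b\le k\le m$, $p_k=1$ for $k>m$, $J(p_k)=\{a,\dots,m\}$ for all $k\in\{a,\dots,m\}$, and $p_a+\dots+p_m=0$. Let $\rho(V,V')=\max_{1\le k\le N}|v_k-v'_k|$ and $\Pi=\{V:\ v_a+\dots+v_m=0\}$. Then there exists $d>0$ such that, with $U=\{V:\rho(V,P)<d\}$, for every $V\in U\setminus\Pi$ with nondecreasing components there exists $n>0$ with $\Phi^n(V)\notin U$.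
   Context: For $V=(v_1,\dots,v_N)\in[-1,1]^N$ and each $k$, let $J(v_k)=\{l\in\{1,\dots,N\}:|v_l-v_k|\le\varepsilon\}$ (computed within the array $V$) and $I(v_k)=|J(v_k)|$. Put $w_k(V)=v_k+\frac{h}{I(v_k)}\sum_{l\in J(v_k)}v_l$. Then $\Phi(V)=(v_1',\dots,v_N')$ where $v_k'=-1$ if $w_k<-1$, $v_k'=1$ if $w_k>1$, and $v_k'=w_k$ if $|w_k|\le1$. *)

theory Defs
  imports Complex_Main
begin

text \<open>Opinion vectors V = (v_1,...,v_N) are functions nat => real, only indices 1..N matter.\<close>

definition Jset :: "nat \<Rightarrow> real \<Rightarrow> (nat \<Rightarrow> real) \<Rightarrow> nat \<Rightarrow> nat set" where
  "Jset N eps V k = {l \<in> {1..N}. \<bar>V l - V k\<bar> \<le> eps}"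

definition Icard :: "nat \<Rightarrow> real \<Rightarrow> (nat \<Rightarrow> real) \<Rightarrow> nat \<Rightarrow> nat" where
  "Icard N eps V k = card (Jset N eps V k)"

definition wval :: "nat \<Rightarrow> real \<Rightarrow> real \<Rightarrow> (nat \<Rightarrow> real) \<Rightarrow> nat \<Rightarrow> real" where
  "wval N h eps V k = V k + h / real (Icard N eps V k) * (\<Sum>l\<in>Jset N eps V k. V l)"

definition Phi :: "nat \<Rightarrow> real \<Rightarrow> real \<Rightarrow> (nat \<Rightarrow> real) \<Rightarrow> (nat \<Rightarrow> real)" where
  "Phi N h eps V = (\<lambda>k. if k \<in> {1..N} then
      (let w = wval N h eps V k in if w < -1 then -1 else if w > 1 then 1 else w)
    else V k)"

definition rho :: "nat \<Rightarrow> (nat \<Rightarrow> real) \<Rightarrow> (nat \<Rightarrow> real) \<Rightarrow> real" where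
  "rho N V V' = Max ((\<lambda>k. \<bar>V k - V' k\<bar>) ` {1..N})"

definition nondecr :: "nat \<Rightarrow> (nat \<Rightarrow> real) \<Rightarrow> bool" where
  "nondecr N V \<longleftrightarrow> (\<forall>i j. 1 \<le> i \<and> i \<le> j \<and> j \<le> N \<longrightarrow> V i \<le> V j)"

definition in_cube :: "nat \<Rightarrow> (nat \<Rightarrow> real) \<Rightarrow> bool" where
  "in_cube N V \<longleftrightarrow> (\<forall>k\<in>{1..N}. -1 \<le> V k \<and> V k \<le> 1)"

definition form_i :: "nat \<Rightarrow> (nat \<Rightarrow> real) \<Rightarrow> nat \<Rightarrow> nat \<Rightarrow> bool" where
  "form_i N P a m \<longleftrightarrow> 1 \<le> a \<and> a \<le> m \<and> m \<le> N \<and>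
     (\<forall>k\<in>{1..N}. (k < a \<longrightarrow> P k = -1) \<and> (a \<le> k \<and> k \<le> m \<longrightarrow> P k = 0) \<and> (m < k \<longrightarrow> P k = 1))"

definition form_ii :: "nat \<Rightarrow> real \<Rightarrow> (nat \<Rightarrow> real) \<Rightarrow> nat \<Rightarrow> nat \<Rightarrow> bool" where
  "form_ii N eps P a m \<longleftrightarrow> (\<exists>l b. 1 \<le> a \<and> a \<le> l \<and> l < b \<and> b \<le> m \<and> m \<le> N \<and>
     (\<forall>k\<in>{1..N}. (k < a \<longrightarrow> P k = -1)
        \<and> (a \<le> k \<and> k \<le> l \<longrightarrow> -eps < P k \<and> P k < 0)
        \<and> (l < k \<and> k < b \<longrightarrow> P k = 0)
        \<and> (b \<le> k \<and> k \<le> m \<longrightarrow> 0 < P k \<and> P k < eps)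
        \<and> (m < k \<longrightarrow> P k = 1))
     \<and> (\<forall>k\<in>{a..m}. Jset N eps P k = {a..m})
     \<and> (\<Sum>k=a..m. P k) = 0)"

end

theory Submission
  imports Defs
begin
lemma rho_lt: assumes "N \<ge> 1" shows "rho N V P < d \<longleftrightarrow> (\<forall>k\<in>{1..N}. \<bar>V k - P k\<bar> < d)"
  unfolding rho_def using assms by (subst Max_less_iff) auto

lemma sum_bound:
  fixes V P :: "nat \<Rightarrow> real" and d nu :: real
  assumes "finite B" "J \<subseteq> B" "sum P B = 0" "\<forall>i\<in>J. \<bar>V i - P i\<bar> \<le> d"
    "\<forall>i\<in>B-J. P i \<ge> 0" "j\<in>B-J" "P j \<ge> nu"
  shows "sum V J \<le> -nu + card J * d"
proof -
  have fJ: "finite J" using assms finite_subset by blast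
  have 1: "sum P B = sum P (B-J) + sum P J" using sum.subset_diff[OF assms(2,1)] by simp
  have 2: "sum P (B-J) = P j + sum P (B-J-{j})" using assms(1,6) by (simp add: sum.remove)
  have 3: "sum P (B-J-{j}) \<ge> 0" using assms(5) by (intro sum_nonneg) auto
  have "sum V J - sum P J = sum (\<lambda>i. V i - P i) J" by (simp add: sum_subtractf)
  also have "\<dots> \<le> sum (\<lambda>_. d) J" using assms(4) by (intro sum_mono) auto
  finally have 4: "sum V J \<le> sum P J + card J * d" by simp
  show ?thesis using 1 2 3 4 assms(3,7) by linarith
qed

context
  fixes N a m :: nat and h eps eta nu d :: real and P :: "nat \<Rightarrow> real"
  assumes a1: "1 \<le> a" and am: "a \<le> m" and mN: "m \<le> N"
   and h0: "0 < h" and eps1: "eps < 1" and eps0: "0 < eps"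
   and H1: "\<forall>k\<in>{a..m}. \<forall>l\<in>{1..N}-{a..m}. eps + 2*d < \<bar>P l - P k\<bar>"
   and H2: "\<forall>k\<in>{a..m}. \<bar>P k\<bar> \<le> eta"
   and H3: "(\<Sum>k=a..m. P k) = 0"
   and g2: "2*d \<le> eps - eta" and g3: "d \<le> 1 - eta"
   and nu0: "0 < nu" and nuP: "\<forall>k\<in>{a..m}. P k \<noteq> 0 \<longrightarrow> nu \<le> \<bar>P k\<bar>"
   and g4: "d \<le> nu / (2 * real (m+1-a))"
   and d0: "0 < d"
begin

lemma J_eq:
  assumes nV: "\<forall>i\<in>{1..N}. \<bar>V i - P i\<bar> < d" and k: "k \<in> {a..m}"
  shows "Jset N eps V k = {l\<in>{a..m}. \<bar>V l - V k\<bar> \<le> eps}"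
proof -
  have "l \<in> {a..m}" if "l \<in> {1..N}" "\<bar>V l - V k\<bar> \<le> eps" for l
  proof (rule ccontr)
    assume "l \<notin> {a..m}"
    hence "eps + 2*d < \<bar>P l - P k\<bar>" using H1 k that by auto
    moreover have "\<bar>V l - P l\<bar> < d" "\<bar>V k - P k\<bar> < d" using nV that k a1 mN by auto
    ultimately show False using that by linarith
  qed
  thus ?thesis unfolding Jset_def using a1 mN by auto
qed

lemma step:
  assumes nV: "\<forall>i\<in>{1..N}. \<bar>V i - P i\<bar> < d"
    and nV': "\<forall>i\<in>{1..N}. \<bar>Phi N h eps V i - P i\<bar> < d" and k: "k \<in> {a..m}"
  shows "Phi N h eps V k = V k + h / card {l\<in>{a..m}. \<bar>V l - V k\<bar> \<le> eps}
            * (\<Sum>l\<in>{l\<in>{a..m}. \<bar>V l - V k\<bar> \<le> eps}. V l)"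
proof -
  have kN: "k \<in> {1..N}" using k a1 mN by auto
  have w: "wval N h eps V k = V k + h / card {l\<in>{a..m}. \<bar>V l - V k\<bar> \<le> eps}
            * (\<Sum>l\<in>{l\<in>{a..m}. \<bar>V l - V k\<bar> \<le> eps}. V l)"
    unfolding wval_def Icard_def J_eq[OF nV k] ..
  have c: "\<bar>Phi N h eps V k - P k\<bar> < d" using nV' kN by auto
  have pk: "\<bar>P k\<bar> \<le> eta" using H2 k by auto
  show ?thesis
  proof (cases "wval N h eps V k < -1 \<or> wval N h eps V k > 1")
    case True
    then show ?thesis using c pk g3 kN unfolding Phi_def Let_def by (auto split: if_splits)
  next
    case False
    then show ?thesis using kN w unfolding Phi_def Let_def by auto
  qed
qed


lemma full_step:
  assumes nV: "\<forall>i\<in>{1..N}. \<bar>V i - P i\<bar> < d"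
    and nV': "\<forall>i\<in>{1..N}. \<bar>Phi N h eps V i - P i\<bar> < d"
    and full: "\<forall>k\<in>{a..m}. \<forall>l\<in>{a..m}. \<bar>V l - V k\<bar> \<le> eps"
  shows "(\<Sum>k=a..m. Phi N h eps V k) = (1+h) * (\<Sum>k=a..m. V k)"
proof -
  have e: "{l\<in>{a..m}. \<bar>V l - V k\<bar> \<le> eps} = {a..m}" if "k \<in> {a..m}" for k
    using full that by auto
  have "(\<Sum>k=a..m. Phi N h eps V k) = (\<Sum>k=a..m. V k + h / card {a..m} * (\<Sum>l=a..m. V l))"
    using step[OF nV nV'] e by (intro sum.cong) auto
  also have "\<dots> = (\<Sum>k=a..m. V k) + card {a..m} * (h / card {a..m} * (\<Sum>l=a..m. V l))"
    by (simp add: sum.distrib)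
  also have "\<dots> = (1+h) * (\<Sum>k=a..m. V k)"
  proof -
    have "real (card {a..m}) \<noteq> 0" using am by simp
    hence "card {a..m} * (h / card {a..m} * (\<Sum>l=a..m. V l)) = h * (\<Sum>l=a..m. V l)" by simp
    thus ?thesis by (simp add: algebra_simps)
  qed
  finally show ?thesis .
qed

lemma avg_bound:
  fixes c s :: real
  assumes "1 \<le> c" "c \<le> I" "s \<le> -nu + c * d"
  shows "h / c * s \<le> - (h * nu / I) + h * d"
proof -
  have "h / c * s \<le> h / c * (-nu + c * d)" using assms h0 by (intro mult_left_mono) auto
  also have "\<dots> = - (h * nu / c) + h * d" using assms by (simp add: field_simps)
  also have "h * nu / I \<le> h * nu / c" using assms h0 nu0 by (intro divide_left_mono) auto
  hence "- (h * nu / c) + h * d \<le> - (h * nu / I) + h * d" by simp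
  finally show ?thesis .
qed

lemma cut_step:
  assumes nV: "\<forall>i\<in>{1..N}. \<bar>V i - P i\<bar> < d"
    and nV': "\<forall>i\<in>{1..N}. \<bar>Phi N h eps V i - P i\<bar> < d"
    and k: "k \<in> {a..m}" and j: "j \<in> {a..m}" and gap: "V j - V k > eps"
  shows "Phi N h eps V j - Phi N h eps V k \<ge> V j - V k + h * nu / real (m+1-a)"
proof -
  define I where "I = real (m+1-a)"
  define Jk where "Jk = {l\<in>{a..m}. \<bar>V l - V k\<bar> \<le> eps}"
  define Jj where "Jj = {l\<in>{a..m}. \<bar>V l - V j\<bar> \<le> eps}"
  have near: "\<bar>V i - P i\<bar> < d" if "i \<in> {a..m}" for i using nV that a1 mN by auto
  have pb: "\<bar>P i\<bar> \<le> eta" if "i \<in> {a..m}" for i using H2 that by auto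
  have nj: "\<bar>V j - P j\<bar> < d" and nk: "\<bar>V k - P k\<bar> < d" using near j k by auto
  have pj: "\<bar>P j\<bar> \<le> eta" and pk: "\<bar>P k\<bar> \<le> eta" using pb j k by auto
  have Pj: "P j > 0" and Pk: "P k < 0" using nj nk pj pk gap g2 by (auto simp: abs_le_iff abs_less_iff)
  have cardB: "card {a..m} = m+1-a" by simp
  have sk: "sum V Jk \<le> -nu + card Jk * d"
  proof (rule sum_bound[where B="{a..m}" and P=P and j=j])
    show "\<forall>i\<in>{a..m}-Jk. P i \<ge> 0"
    proof
      fix i assume i: "i \<in> {a..m}-Jk"
      hence "\<bar>V i - V k\<bar> > eps" unfolding Jk_def by auto
      moreover have "\<bar>V i - P i\<bar> < d" "\<bar>P i\<bar> \<le> eta" using i near pb by auto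
      ultimately show "P i \<ge> 0" using nk pk Pk g2 by (auto simp: abs_le_iff abs_less_iff)
    qed
    show "j \<in> {a..m}-Jk" using j gap unfolding Jk_def by auto
    show "P j \<ge> nu"
    proof -
      have "P j \<noteq> 0" using Pj by simp
      hence "nu \<le> \<bar>P j\<bar>" using nuP j by blast
      thus ?thesis using Pj by simp
    qed
    show "\<forall>i\<in>Jk. \<bar>V i - P i\<bar> \<le> d" using near unfolding Jk_def by (auto intro: less_imp_le)
  qed (use H3 in \<open>auto simp: Jk_def\<close>)
  have cJk: "1 \<le> real (card Jk)" "real (card Jk) \<le> I"
  proof -
    have "k \<in> Jk" using k eps0 unfolding Jk_def by auto
    moreover have "finite Jk" unfolding Jk_def by simp
    ultimately have "card Jk > 0" using card_gt_0_iff by blast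
    hence "card Jk \<ge> 1" by simp
    thus "1 \<le> real (card Jk)" by simp
    have "card Jk \<le> card {a..m}" unfolding Jk_def by (intro card_mono) auto
    thus "real (card Jk) \<le> I" unfolding I_def using cardB by simp
  qed
  have ak: "h / card Jk * sum V Jk \<le> - (h * nu / I) + h * d" by (rule avg_bound[OF cJk sk])
  have sj: "sum (\<lambda>i. - V i) Jj \<le> -nu + card Jj * d"
  proof (rule sum_bound[where B="{a..m}" and P="\<lambda>i. - P i" and j=k])
    show "\<forall>i\<in>{a..m}-Jj. - P i \<ge> 0"
    proof
      fix i assume i: "i \<in> {a..m}-Jj"
      hence "\<bar>V i - V j\<bar> > eps" unfolding Jj_def by auto
      moreover have "\<bar>V i - P i\<bar> < d" "\<bar>P i\<bar> \<le> eta" using i near pb by auto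
      ultimately show "- P i \<ge> 0" using nj pj Pj g2 by (auto simp: abs_le_iff abs_less_iff)
    qed
    show "k \<in> {a..m}-Jj" using k gap unfolding Jj_def by auto
    show "- P k \<ge> nu"
    proof -
      have "P k \<noteq> 0" using Pk by simp
      hence "nu \<le> \<bar>P k\<bar>" using nuP k by blast
      thus ?thesis using Pk by simp
    qed
    show "\<forall>i\<in>Jj. \<bar>- V i - - P i\<bar> \<le> d"
    proof
      fix i assume "i \<in> Jj"
      hence "\<bar>V i - P i\<bar> < d" using near unfolding Jj_def by auto
      thus "\<bar>- V i - - P i\<bar> \<le> d" by linarith
    qed
  qed (use H3 in \<open>auto simp: Jj_def sum_negf\<close>)
  have cJj: "1 \<le> real (card Jj)" "real (card Jj) \<le> I"
  proof -
    have "j \<in> Jj" using j eps0 unfolding Jj_def by auto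
    moreover have "finite Jj" unfolding Jj_def by simp
    ultimately have "card Jj > 0" using card_gt_0_iff by blast
    hence "card Jj \<ge> 1" by simp
    thus "1 \<le> real (card Jj)" by simp
    have "card Jj \<le> card {a..m}" unfolding Jj_def by (intro card_mono) auto
    thus "real (card Jj) \<le> I" unfolding I_def using cardB by simp
  qed
  have aj0: "h / card Jj * sum (\<lambda>i. - V i) Jj \<le> - (h * nu / I) + h * d" by (rule avg_bound[OF cJj sj])
  have aj: "h / card Jj * sum V Jj \<ge> h * nu / I - h * d" using aj0 by (simp add: sum_negf)
  have e1: "Phi N h eps V k = V k + h / card Jk * sum V Jk" unfolding Jk_def by (rule step[OF nV nV' k])
  have e2: "Phi N h eps V j = V j + h / card Jj * sum V Jj" unfolding Jj_def by (rule step[OF nV nV' j])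
  have "2 * (h * d) \<le> h * nu / I"
  proof -
    have "h * (2 * d) \<le> h * (nu / I)" using g4 h0 unfolding I_def by (intro mult_left_mono) auto
    thus ?thesis by simp
  qed
  hence "Phi N h eps V j - Phi N h eps V k \<ge> V j - V k + h * nu / I" using e1 e2 ak aj by linarith
  thus ?thesis unfolding I_def .
qed


lemma core:
  assumes n0: "\<forall>i\<in>{1..N}. \<bar>V i - P i\<bar> < d" and S0: "(\<Sum>k=a..m. V k) \<noteq> 0"
  shows "\<exists>n>0. \<not> (\<forall>i\<in>{1..N}. \<bar>(Phi N h eps ^^ n) V i - P i\<bar> < d)"
proof (rule ccontr)
  assume A: "\<not> ?thesis"
  define X where "X n = (Phi N h eps ^^ n) V" for n
  have nX: "\<forall>i\<in>{1..N}. \<bar>X n i - P i\<bar> < d" for n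
  proof (cases n)
    case 0 thus ?thesis using n0 by (simp add: X_def)
  next
    case (Suc n') thus ?thesis using A unfolding X_def by blast
  qed
  have XS: "X (Suc n) = Phi N h eps (X n)" for n by (simp add: X_def)
  have nX': "\<forall>i\<in>{1..N}. \<bar>Phi N h eps (X n) i - P i\<bar> < d" for n using nX[of "Suc n"] XS by simp
  define I where "I = real (m+1-a)"
  have I0: "I > 0" unfolding I_def using am by simp
  have Sb: "\<bar>\<Sum>k=a..m. X n k\<bar> \<le> I * d" for n
  proof -
    have "(\<Sum>k=a..m. X n k) = (\<Sum>k=a..m. X n k - P k)" using H3 by (simp add: sum_subtractf)
    hence "\<bar>\<Sum>k=a..m. X n k\<bar> \<le> (\<Sum>k=a..m. \<bar>X n k - P k\<bar>)" by (metis sum_abs)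
    also have "\<dots> \<le> (\<Sum>k=a..m. d)" using nX[of n] a1 mN by (intro sum_mono) (auto intro: less_imp_le)
    also have "\<dots> = I * d" unfolding I_def by simp
    finally show ?thesis .
  qed
  show False
  proof (cases "\<forall>n. \<forall>k\<in>{a..m}. \<forall>l\<in>{a..m}. \<bar>X n l - X n k\<bar> \<le> eps")
    case True
    have G: "(\<Sum>k=a..m. X n k) = (1+h)^n * (\<Sum>k=a..m. V k)" for n
    proof (induction n)
      case 0 thus ?case by (simp add: X_def)
    next
      case (Suc n)
      have "(\<Sum>k=a..m. X (Suc n) k) = (1+h) * (\<Sum>k=a..m. X n k)"
        unfolding XS using full_step[OF nX[of n] nX'[of n]] True by blast
      thus ?case using Suc by simp
    qed
    define s where "s = \<bar>\<Sum>k=a..m. V k\<bar>"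
    have s0: "s > 0" using S0 unfolding s_def by simp
    obtain n :: nat where n: "I*d/(h*s) < n" using reals_Archimedean2 by blast
    have "I*d < n * (h*s)" using n s0 h0 by (simp add: pos_divide_less_eq)
    also have "n * (h * s) \<le> (1 + n * h) * s" using s0 by (simp add: algebra_simps)
    also have "\<dots> \<le> (1+h)^n * s" using Bernoulli_inequality[of h n] h0 s0 by (intro mult_right_mono) auto
    also have "\<dots> = \<bar>\<Sum>k=a..m. X n k\<bar>" unfolding G s_def using h0 by (simp add: abs_mult)
    finally show False using Sb[of n] by linarith
  next
    case False
    then obtain n0 k l where kl: "k \<in> {a..m}" "l \<in> {a..m}" "\<bar>X n0 l - X n0 k\<bar> > eps" by (meson not_le)
    obtain j k where jk: "j \<in> {a..m}" "k \<in> {a..m}" "X n0 j - X n0 k > eps"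
    proof (cases "X n0 l - X n0 k > eps")
      case True thus ?thesis using that kl by blast
    next
      case False
      hence "X n0 k - X n0 l > eps" using kl by (auto simp: abs_if split: if_splits)
      thus ?thesis using that kl by blast
    qed
    define c where "c = h * nu / I"
    have c0: "c > 0" unfolding c_def using h0 nu0 I0 by simp
    have G: "X (n0+t) j - X (n0+t) k \<ge> X n0 j - X n0 k + t * c" for t
    proof (induction t)
      case 0 thus ?case by simp
    next
      case (Suc t)
      have gap: "X (n0+t) j - X (n0+t) k > eps" using Suc jk(3) c0
        by (smt (verit) of_nat_0_le_iff mult_nonneg_nonneg)
      have "X (n0 + Suc t) j - X (n0 + Suc t) k \<ge> X (n0+t) j - X (n0+t) k + c"
        using cut_step[OF nX[of "n0+t"] nX'[of "n0+t"] jk(2) jk(1) gap] XS[of "n0+t"]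
        unfolding c_def I_def by simp
      thus ?case using Suc by (simp add: algebra_simps)
    qed
    have bnd: "X n j - X n k \<le> 2 * eta + 2 * d" for n
    proof -
      have "\<bar>X n j - P j\<bar> < d" "\<bar>X n k - P k\<bar> < d" using nX[of n] jk a1 mN by auto
      moreover have "\<bar>P j\<bar> \<le> eta" "\<bar>P k\<bar> \<le> eta" using H2 jk by auto
      ultimately show ?thesis by (auto simp: abs_le_iff abs_less_iff)
    qed
    obtain t :: nat where t: "(2 * eta + 2 * d) / c < t" using reals_Archimedean2 by blast
    hence "2 * eta + 2 * d < t * c" using c0 by (simp add: pos_divide_less_eq)
    moreover have "X n0 j - X n0 k > 0" using jk eps0 by linarith
    ultimately show False using G[of t] bnd[of "n0+t"] by linarith
  qed
qed

end

lemma forms: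
  assumes F: "form_i N P a m \<or> form_ii N eps P a m" and e0: "0 < eps" and e1: "eps < 1"
  shows "1 \<le> a \<and> a \<le> m \<and> m \<le> N \<and> (\<forall>k\<in>{a..m}. \<forall>l\<in>{1..N}-{a..m}. eps < \<bar>P l - P k\<bar>)
     \<and> (\<forall>k\<in>{a..m}. \<bar>P k\<bar> < eps) \<and> (\<Sum>k=a..m. P k) = 0"
  using F
proof
  assume f: "form_i N P a m"
  hence b: "1 \<le> a" "a \<le> m" "m \<le> N" unfolding form_i_def by auto
  have z: "P k = 0" if "k \<in> {a..m}" for k using f that b unfolding form_i_def by auto
  have o: "\<bar>P l\<bar> = 1" if "l \<in> {1..N}-{a..m}" for l
  proof -
    have "l < a \<or> m < l" using that by auto
    thus ?thesis using f that unfolding form_i_def by auto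
  qed
  show ?thesis using b z o e0 e1 by auto
next
  assume "form_ii N eps P a m"
  then obtain l b where f: "1 \<le> a \<and> a \<le> l \<and> l < b \<and> b \<le> m \<and> m \<le> N \<and>
     (\<forall>k\<in>{1..N}. (k < a \<longrightarrow> P k = -1)
        \<and> (a \<le> k \<and> k \<le> l \<longrightarrow> -eps < P k \<and> P k < 0)
        \<and> (l < k \<and> k < b \<longrightarrow> P k = 0)
        \<and> (b \<le> k \<and> k \<le> m \<longrightarrow> 0 < P k \<and> P k < eps)
        \<and> (m < k \<longrightarrow> P k = 1))
     \<and> (\<forall>k\<in>{a..m}. Jset N eps P k = {a..m})
     \<and> (\<Sum>k=a..m. P k) = 0" unfolding form_ii_def by blast
  have H1: "eps < \<bar>P l' - P k\<bar>" if "k \<in> {a..m}" "l' \<in> {1..N}-{a..m}" for k l'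
  proof -
    have "Jset N eps P k = {a..m}" using f that by blast
    hence "l' \<notin> Jset N eps P k" using that by auto
    thus ?thesis using that unfolding Jset_def by auto
  qed
  have H2: "\<bar>P k\<bar> < eps" if "k \<in> {a..m}" for k
  proof -
    have kN: "k \<in> {1..N}" using that f by auto
    have "k \<le> l \<or> (l < k \<and> k < b) \<or> b \<le> k" by auto
    thus ?thesis using f kN that e0 by (auto simp: abs_if)
  qed
  show ?thesis using f H1 H2 by auto
qed

theorem theorem3:
  fixes N a m :: nat and h eps :: real and P :: "nat \<Rightarrow> real"
  assumes "N \<ge> 1" and "0 < h" "h < 1" and "0 < eps" "eps < 1"
    and "\<forall>k\<in>{1..N}. Phi N h eps P k = P k"
    and "nondecr N P"
    and "form_i N P a m \<or> form_ii N eps P a m"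
  shows "\<exists>d>0. \<forall>V. in_cube N V \<and> nondecr N V \<and> rho N V P < d \<and> (\<Sum>k=a..m. V k) \<noteq> 0
           \<longrightarrow> (\<exists>n>0. \<not> rho N ((Phi N h eps ^^ n) V) P < d)"
proof -
  note F = forms[OF assms(8) assms(4) assms(5)]
  have a1: "1 \<le> a" and am: "a \<le> m" and mN: "m \<le> N" using F by auto
  have H1: "\<forall>k\<in>{a..m}. \<forall>l\<in>{1..N}-{a..m}. eps < \<bar>P l - P k\<bar>" using F by blast
  have Hlt: "\<forall>k\<in>{a..m}. \<bar>P k\<bar> < eps" using F by blast
  have H3: "(\<Sum>k=a..m. P k) = 0" using F by blast
  define eta where "eta = Max ((\<lambda>k. \<bar>P k\<bar>) ` {a..m})"
  have eta_lt: "eta < eps" unfolding eta_def using Hlt am by (subst Max_less_iff) auto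
  have H2: "\<forall>k\<in>{a..m}. \<bar>P k\<bar> \<le> eta" unfolding eta_def by auto
  define nu where "nu = Min (insert 1 ((\<lambda>k. \<bar>P k\<bar>) ` {k\<in>{a..m}. P k \<noteq> 0}))"
  have nu0: "0 < nu" unfolding nu_def by (subst Min_gr_iff) auto
  have nuP: "\<forall>k\<in>{a..m}. P k \<noteq> 0 \<longrightarrow> nu \<le> \<bar>P k\<bar>" unfolding nu_def by (auto intro: Min_le)
  define gam where "gam = Min (insert 1 ((\<lambda>(k,l). \<bar>P l - P k\<bar> - eps) ` ({a..m} \<times> ({1..N}-{a..m}))))"
  have gam0: "0 < gam" unfolding gam_def using H1 by (subst Min_gr_iff) auto
  have gamP: "gam \<le> \<bar>P l - P k\<bar> - eps" if "k \<in> {a..m}" "l \<in> {1..N}-{a..m}" for k l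
  proof -
    have "\<bar>P l - P k\<bar> - eps \<in> insert 1 ((\<lambda>(k,l). \<bar>P l - P k\<bar> - eps) ` ({a..m} \<times> ({1..N}-{a..m})))"
      using that by force
    thus ?thesis unfolding gam_def by (intro Min_le) auto
  qed
  define d where "d = min (gam/4) (min ((eps-eta)/2) (min (1-eta) (nu/(2*real(m+1-a)))))"
  have d0: "0 < d" unfolding d_def using gam0 eta_lt assms(5) nu0 am by auto
  have g1: "\<forall>k\<in>{a..m}. \<forall>l\<in>{1..N}-{a..m}. eps + 2*d < \<bar>P l - P k\<bar>"
  proof (intro ballI)
    fix k l assume "k \<in> {a..m}" "l \<in> {1..N}-{a..m}"
    hence "gam \<le> \<bar>P l - P k\<bar> - eps" by (rule gamP)
    moreover have "d \<le> gam/4" unfolding d_def by (rule min.cobounded1)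
    ultimately show "eps + 2*d < \<bar>P l - P k\<bar>" using gam0 by linarith
  qed
  have dm: "d \<le> (eps-eta)/2" "d \<le> 1-eta" "d \<le> nu/(2*real(m+1-a))"
    unfolding d_def by (simp_all only: min_le_iff_disj) blast+
  have g2: "2*d \<le> eps - eta" using dm(1) by (simp add: field_simps)
  have g3: "d \<le> 1 - eta" and g4: "d \<le> nu / (2 * real (m+1-a))" using dm by auto
  show ?thesis
  proof (intro exI[of _ d] conjI allI impI d0)
    fix V assume V: "in_cube N V \<and> nondecr N V \<and> rho N V P < d \<and> (\<Sum>k=a..m. V k) \<noteq> 0"
    have n0: "\<forall>i\<in>{1..N}. \<bar>V i - P i\<bar> < d" using V rho_lt[OF assms(1)] by blast
    obtain n where "n > 0" "\<not> (\<forall>i\<in>{1..N}. \<bar>(Phi N h eps ^^ n) V i - P i\<bar> < d)"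
      using core[OF a1 am mN assms(2) assms(5) assms(4) g1 H2 H3 g2 g3 nu0 nuP g4 d0 n0] V by blast
    thus "\<exists>n>0. \<not> rho N ((Phi N h eps ^^ n) V) P < d" using rho_lt[OF assms(1)] by blast
  qed
qed

end
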